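(* Let $1\le d<n$, $\underline i=i_1\cdots i_d\in I(d,n)$, and consider root operators $f_{s,h},f_{t,k}$ (all operators below are assumed to be defined, i.e. their indices admissible). (i) If $|h-k|>1$, or $|h-k|=1$ and $|s-t|>1$, then $f_{s,h}f_{t,k}(\underline i)=f_{t,k}f_{s,h}(\underline i)$. (ii) If $|s-t|>1$ or $s=t$, then $f_{s,h}f_{t,h}(\underline i)=0=f_{t,h}f_{s,h}(\underline i)$. (iii) $f_{s,h}f_{s+1,h}(\underline i)=0$, and $f_{s+1,h}f_{s,h}(\underline i)\neq0$ if and only if $i_h=s$ and either $h=d$ or $i_{h+1}>s+2$. (iv) $f_{s+1,h+1}f_{s,h}(\underline i)=f_{s,h+1}f_{s+1,h}(\underline i)=f_{s+1,h}f_{s,h+1}(\underline i)=0$, and $f_{s,h}f_{s+1,h+1}(\underline i)\neq0$ if and only if $i_h=s$, $i_{h+1}=s+1$ and either $h+1=d$ or $i_{h+2}>s+2$.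
   Context: $I(d,n)$ is the set of $d$-element subsets of $\{1,\dots,n\}$ written as increasing sequences. For $1\le h\le d$ and $h\le s<n-d+h$, the root operator $f_{s,h}$ on $I(d,n)\sqcup\{0\}$ ($0$ a formal symbol) is defined by $f_{s,h}(0)=0$ and $f_{s,h}(i_1\cdots i_d)=i_1\cdots i_{h-1}(s+1)i_{h+1}\cdots i_d$ if $i_h=s$ and either $h=d$ or $i_{h+1}\ge s+2$, and $0$ otherwise. *)

theory Defs
  imports Main
begin

text \<open>I(d,n): d-element subsets of {1..n} as strictly increasing lists of length d.\<close>
definition Idn :: "nat \<Rightarrow> nat \<Rightarrow> nat list set" where
  "Idn d n = {xs. length xs = d \<and> sorted_wrt (<) xs \<and> set xs \<subseteq> {1..n}}"

definition entry :: "nat list \<Rightarrow> nat \<Rightarrow> nat" where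
  "entry xs h = xs ! (h - 1)"

text \<open>Elements of I(d,n) disjoint-union {0} are modelled as nat list option,
  with None playing the role of the formal symbol 0.\<close>
fun root_op :: "nat \<Rightarrow> nat \<Rightarrow> nat \<Rightarrow> nat list option \<Rightarrow> nat list option" where
  "root_op d s h None = None"
| "root_op d s h (Some xs) =
     (if entry xs h = s \<and> (h = d \<or> entry xs (h + 1) \<ge> s + 2)
      then Some (xs[h - 1 := s + 1]) else None)"

definition admissible :: "nat \<Rightarrow> nat \<Rightarrow> nat \<Rightarrow> nat \<Rightarrow> bool" where
  "admissible d n s h \<longleftrightarrow> 1 \<le> h \<and> h \<le> d \<and> h \<le> s \<and> s < n - d + h"

end

theory Submission
  imports Defs
begin

definition upd :: "nat list \<Rightarrow> nat \<Rightarrow> nat \<Rightarrow> nat list" where "upd xs h v = xs[h-1:=v]"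
lemma entry_upd: "1 \<le> h \<Longrightarrow> h \<le> length xs \<Longrightarrow> 1 \<le> k \<Longrightarrow> entry (upd xs h v) k = (if k = h then v else entry xs k)"
  by (auto simp add: entry_def upd_def nth_list_update)
lemma len_upd[simp]: "length (upd xs h v) = length xs" by (simp add: upd_def)
lemma ro: "root_op d s h (Some xs) = (if entry xs h = s \<and> (h = d \<or> entry xs (h + 1) \<ge> s + 2)
      then Some (upd xs h (s + 1)) else None)" by (simp add: upd_def)
declare root_op.simps(2)[simp del]

lemma P3: "length i = d \<Longrightarrow> admissible d n s h \<Longrightarrow> admissible d n (s + 1) h \<Longrightarrow>
        root_op d s h (root_op d (s + 1) h (Some i)) = None \<and>
        (root_op d (s + 1) h (root_op d s h (Some i)) \<noteq> None \<longleftrightarrow>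
           entry i h = s \<and> (h = d \<or> entry i (h + 1) > s + 2))"
  unfolding admissible_def
  by (simp add: ro entry_upd)
lemma P2: "length i = d \<Longrightarrow> admissible d n s h \<Longrightarrow> admissible d n t h \<Longrightarrow>
        (\<bar>int s - int t\<bar> > 1 \<or> s = t) \<Longrightarrow>
        root_op d s h (root_op d t h (Some i)) = None \<and>
        root_op d t h (root_op d s h (Some i)) = None"
  unfolding admissible_def
  by (auto simp add: ro entry_upd)
lemma P4: "length i = d \<Longrightarrow> admissible d n (s + 1) (h + 1) \<Longrightarrow> admissible d n s h \<Longrightarrow>
        root_op d (s + 1) (h + 1) (root_op d s h (Some i)) = None"
  unfolding admissible_def
  by (simp add: ro entry_upd)
lemma P5: "length i = d \<Longrightarrow> admissible d n s (h + 1) \<Longrightarrow> admissible d n (s + 1) h \<Longrightarrow>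
        root_op d s (h + 1) (root_op d (s + 1) h (Some i)) = None \<and>
        root_op d (s + 1) h (root_op d s (h + 1) (Some i)) = None"
  unfolding admissible_def
  by (simp add: ro entry_upd)
lemma P6: "length i = d \<Longrightarrow> admissible d n s h \<Longrightarrow> admissible d n (s + 1) (h + 1) \<Longrightarrow>
        (root_op d s h (root_op d (s + 1) (h + 1) (Some i)) \<noteq> None \<longleftrightarrow>
           entry i h = s \<and> entry i (h + 1) = s + 1 \<and>
           (h + 1 = d \<or> entry i (h + 2) > s + 2))"
  unfolding admissible_def
  by (auto simp add: ro entry_upd)
lemma srt: "sorted_wrt (<) xs \<Longrightarrow> 1 \<le> h \<Longrightarrow> h + 1 \<le> length xs \<Longrightarrow> entry xs h < entry xs (h+1)"
  unfolding entry_def by (simp add: sorted_wrt_nth_less)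
lemma P1: "length i = d \<Longrightarrow> sorted_wrt (<) i \<Longrightarrow> admissible d n s h \<Longrightarrow> admissible d n t k \<Longrightarrow>
        (\<bar>int h - int k\<bar> > 1 \<or> (\<bar>int h - int k\<bar> = 1 \<and> \<bar>int s - int t\<bar> > 1)) \<Longrightarrow>
        root_op d s h (root_op d t k (Some i)) = root_op d t k (root_op d s h (Some i))"
  unfolding admissible_def
proof -
  assume a: "length i = d" "sorted_wrt (<) i" "1 \<le> h \<and> h \<le> d \<and> h \<le> s \<and> s < n - d + h"
    "1 \<le> k \<and> k \<le> d \<and> k \<le> t \<and> t < n - d + k"
    "(\<bar>int h - int k\<bar> > 1 \<or> (\<bar>int h - int k\<bar> = 1 \<and> \<bar>int s - int t\<bar> > 1))"
  have c: "upd (upd i h (s+1)) k (t+1) = upd (upd i k (t+1)) h (s+1)" if "h \<noteq> k"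
    proof -
    have "h - 1 \<noteq> k - 1" using that a by linarith
    then show ?thesis unfolding upd_def by (rule list_update_swap)
  qed
  consider "k + 1 < h \<or> h + 1 < k" | "k = h + 1" "\<bar>int s - int t\<bar> > 1" | "h = k + 1" "\<bar>int s - int t\<bar> > 1"
    using a(5) by linarith
  then show ?thesis
  proof cases
    case 1
    then show ?thesis using a c by (auto simp add: ro entry_upd)
  next
    case 2
    have "entry i h < entry i k" using srt[OF a(2), of h] a 2 by simp
    then show ?thesis using a c 2 by (auto simp add: ro entry_upd)
  next
    case 3
    have "entry i k < entry i h" using srt[OF a(2), of k] a 3 by simp
    then show ?thesis using a c 3 by (auto simp add: ro entry_upd)
  qed
qed
theorem proposition2p13:
  fixes d n :: nat and i :: "nat list"
  assumes "1 \<le> d" and "d < n" and "i \<in> Idn d n"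
  shows
   "(\<forall>s h t k. admissible d n s h \<and> admissible d n t k \<and>
        (\<bar>int h - int k\<bar> > 1 \<or> (\<bar>int h - int k\<bar> = 1 \<and> \<bar>int s - int t\<bar> > 1)) \<longrightarrow>
        root_op d s h (root_op d t k (Some i)) = root_op d t k (root_op d s h (Some i)))
  \<and> (\<forall>s t h. admissible d n s h \<and> admissible d n t h \<and>
        (\<bar>int s - int t\<bar> > 1 \<or> s = t) \<longrightarrow>
        root_op d s h (root_op d t h (Some i)) = None \<and>
        root_op d t h (root_op d s h (Some i)) = None)
  \<and> (\<forall>s h. admissible d n s h \<and> admissible d n (s + 1) h \<longrightarrow>
        root_op d s h (root_op d (s + 1) h (Some i)) = None \<and>
        (root_op d (s + 1) h (root_op d s h (Some i)) \<noteq> None \<longleftrightarrow>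
           entry i h = s \<and> (h = d \<or> entry i (h + 1) > s + 2)))
  \<and> (\<forall>s h. admissible d n (s + 1) (h + 1) \<and> admissible d n s h \<longrightarrow>
        root_op d (s + 1) (h + 1) (root_op d s h (Some i)) = None)
  \<and> (\<forall>s h. admissible d n s (h + 1) \<and> admissible d n (s + 1) h \<longrightarrow>
        root_op d s (h + 1) (root_op d (s + 1) h (Some i)) = None \<and>
        root_op d (s + 1) h (root_op d s (h + 1) (Some i)) = None)
  \<and> (\<forall>s h. admissible d n s h \<and> admissible d n (s + 1) (h + 1) \<longrightarrow>
        (root_op d s h (root_op d (s + 1) (h + 1) (Some i)) \<noteq> None \<longleftrightarrow>
           entry i h = s \<and> entry i (h + 1) = s + 1 \<and>
           (h + 1 = d \<or> entry i (h + 2) > s + 2)))"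
  proof -
  have L: "length i = d" and S: "sorted_wrt (<) i" using assms(3) by (auto simp: Idn_def)
  show ?thesis
    apply (intro conjI allI impI; elim conjE)
         apply (rule P1[OF L S]; assumption)
        apply (rule P2[OF L, THEN conjunct1]; assumption)
       apply (rule P2[OF L, THEN conjunct2]; assumption)
      apply (rule P3[OF L, THEN conjunct1]; assumption)
     apply (rule P3[OF L, THEN conjunct2]; assumption)
    apply (rule P4[OF L]; assumption)
   apply (rule P5[OF L, THEN conjunct1]; assumption)
  apply (rule P5[OF L, THEN conjunct2]; assumption)
  apply (rule P6[OF L]; assumption)
  done
qed

end
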